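(* Let $\mathcal{M} = \{0,1\}^n$ with $n$ even. Consider the following construction. $\mathsf{Gen}(w)$: let $a=[w]_1^{n/2}$ and $b=[w]_{n/2+1}^n$ (the first and second halves of $w$), viewed as elements of $\mathbb{F}_{2^{n/2}}$; select a uniformly random $i\in \mathbb{F}_{2^{n/2}}$; set $\sigma = [ia+b]_1^{v}$ and $R=[ia+b]_{v+1}^{n/2}$; output the key $R$ and the public string $P=(i,\sigma)$. $\mathsf{Rep}(w, P'=(i',\sigma'))$: with $a,b$ the halves of $w$ as before, if $\sigma'=[i'a+b]_1^{v}$ output $R'=[i'a+b]_{v+1}^{n/2}$, else output $\bot$. Setting $v = n/2 - \ell$, this construction is an $(m,\ell,0,\varepsilon)$-fuzzy extractor with post-application robustness $\delta$, for any $m,\ell,\varepsilon,\delta$ satisfying $\ell \leq m - n/2 -\log\frac{1}{\delta}$, as long as $m\geq n/2 + 2\log\frac{1}{\varepsilon}$.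
   Context: Notation: $[x]_i^j$ denotes the substring $x_i x_{i+1}\ldots x_j$; addition in $\mathbb{F}_{2^{n/2}}$ corresponds to bitwise XOR. An $(m,\ell,t,\varepsilon)$-fuzzy extractor is a pair $(\mathsf{Gen},\mathsf{Rep})$ such that $\mathsf{Gen}(w)$ outputs $R\in\{0,1\}^\ell$ and helper $P$; $\mathsf{Rep}(w',P)=R$ whenever the Hamming distance between $w$ and $w'$ is at most $t$; and for every $W$ with min-entropy ${\mathbf{H}}_\infty(W)\ge m$, the statistical distance between $(R,P)$ and $U_\ell\times P$ is at most $\varepsilon$. Post-application robustness $\delta$: for every distribution $W$ with min-entropy at least $m$ (here $w'=w$) and every (computationally unbounded) adversary $\mathcal{A}$, the probability that $\mathcal{A}$, given both $R$ and $P$ from $\mathsf{Gen}(w)$, outputs $\tilde P\ne P$ with $\mathsf{Rep}(w,\tilde P)\neq\bot$ is at most $\delta$. Logarithms are base 2. *)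

theory Defs
  imports "HOL-Probability.Probability"
begin

definition min_entropy :: "'a pmf \<Rightarrow> real" where
  "min_entropy W = - log 2 (SUP w. pmf W w)"

definition stat_dist :: "'a pmf \<Rightarrow> 'a pmf \<Rightarrow> real" where
  "stat_dist p q = (1/2) * (\<Sum>\<^sub>\<infinity> x. \<bar>pmf p x - pmf q x\<bar>)"

definition hamming_dist :: "bool list \<Rightarrow> bool list \<Rightarrow> nat" where
  "hamming_dist xs ys = card {i. i < length xs \<and> xs ! i \<noteq> ys ! i}"

definition uniform_bits :: "nat \<Rightarrow> bool list pmf" where
  "uniform_bits l = pmf_of_set {xs. length xs = l}"

text \<open>(m, l, t, eps)-fuzzy extractor on M = {0,1}^n. Gen is randomized (a pmf over
  pairs (R, P)); Rep returns None for the failure symbol bot.\<close>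
definition fuzzy_extractor ::
  "nat \<Rightarrow> real \<Rightarrow> nat \<Rightarrow> nat \<Rightarrow> real \<Rightarrow>
   (bool list \<Rightarrow> (bool list \<times> 'p) pmf) \<Rightarrow> (bool list \<Rightarrow> 'p \<Rightarrow> bool list option) \<Rightarrow> bool" where
  "fuzzy_extractor n m l t eps Gen Rep \<longleftrightarrow>
     (\<forall>w. length w = n \<longrightarrow>
        (\<forall>R P. (R, P) \<in> set_pmf (Gen w) \<longrightarrow>
           length R = l \<and>
           (\<forall>w'. length w' = n \<and> hamming_dist w w' \<le> t \<longrightarrow> Rep w' P = Some R))) \<and>
     (\<forall>W :: bool list pmf. set_pmf W \<subseteq> {w. length w = n} \<and> min_entropy W \<ge> m \<longrightarrow>
        stat_dist (bind_pmf W Gen)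
                  (pair_pmf (uniform_bits l) (map_pmf snd (bind_pmf W Gen))) \<le> eps)"

definition post_app_robust ::
  "nat \<Rightarrow> real \<Rightarrow> real \<Rightarrow>
   (bool list \<Rightarrow> (bool list \<times> 'p) pmf) \<Rightarrow> (bool list \<Rightarrow> 'p \<Rightarrow> bool list option) \<Rightarrow> bool" where
  "post_app_robust n m delta Gen Rep \<longleftrightarrow>
     (\<forall>(W :: bool list pmf) (A :: bool list \<Rightarrow> 'p \<Rightarrow> 'p pmf).
        set_pmf W \<subseteq> {w. length w = n} \<and> min_entropy W \<ge> m \<longrightarrow>
        measure_pmf.prob
          (bind_pmf W (\<lambda>w. bind_pmf (Gen w) (\<lambda>(R, P).
             map_pmf (\<lambda>P'. (w, P, P')) (A R P))))
          {(w, P, P'). P' \<noteq> P \<and> Rep w P' \<noteq> None} \<le> delta)"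

text \<open>enc is the bit representation of F_{2^k} (k = n/2); a and b are the halves of w
  viewed as field elements; [x]_1^v = take v, [x]_{v+1}^k = drop v.\<close>
definition gen_ex :: "('f::{field,finite} \<Rightarrow> bool list) \<Rightarrow> nat \<Rightarrow> nat \<Rightarrow>
    bool list \<Rightarrow> (bool list \<times> ('f \<times> bool list)) pmf" where
  "gen_ex enc k v w =
     (let a = inv enc (take k w); b = inv enc (drop k w)
      in map_pmf (\<lambda>i. let y = enc (i * a + b) in (drop v y, (i, take v y)))
                 (pmf_of_set (UNIV :: 'f set)))"

definition rep_ex :: "('f::{field,finite} \<Rightarrow> bool list) \<Rightarrow> nat \<Rightarrow> nat \<Rightarrow>
    bool list \<Rightarrow> ('f \<times> bool list) \<Rightarrow> bool list option" where
  "rep_ex enc k v w P' =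
     (let a = inv enc (take k w); b = inv enc (drop k w);
          y = enc (fst P' * a + b)
      in if snd P' = take v y then Some (drop v y) else None)"

end

theory Submission
  imports Defs
begin

lemma stat_dist_finite:
  assumes "finite S" "set_pmf p \<subseteq> S" "set_pmf q \<subseteq> S"
  shows "stat_dist p q = 1/2 * (\<Sum>x\<in>S. \<bar>pmf p x - pmf q x\<bar>)"
proof -
  have "(\<Sum>\<^sub>\<infinity> x. \<bar>pmf p x - pmf q x\<bar>) = (\<Sum>\<^sub>\<infinity> x\<in>S. \<bar>pmf p x - pmf q x\<bar>)"
  proof (rule infsum_cong_neutral)
    fix x assume "x \<in> UNIV - S"
    hence "x \<notin> set_pmf p" "x \<notin> set_pmf q" using assms by auto
    thus "\<bar>pmf p x - pmf q x\<bar> = 0" by (simp add: set_pmf_iff)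
  qed auto
  also have "\<dots> = (\<Sum>x\<in>S. \<bar>pmf p x - pmf q x\<bar>)" using assms(1) by simp
  finally show ?thesis unfolding stat_dist_def by simp
qed

lemma stat_dist_triangle:
  assumes "finite (set_pmf p)" "finite (set_pmf q)" "finite (set_pmf r)"
  shows "stat_dist p r \<le> stat_dist p q + stat_dist q r"
proof -
  let ?S = "set_pmf p \<union> set_pmf q \<union> set_pmf r"
  have f: "finite ?S" using assms by auto
  have "(\<Sum>x\<in>?S. \<bar>pmf p x - pmf r x\<bar>) \<le> (\<Sum>x\<in>?S. \<bar>pmf p x - pmf q x\<bar> + \<bar>pmf q x - pmf r x\<bar>)"
    by (intro sum_mono) linarith
  also have "\<dots> = (\<Sum>x\<in>?S. \<bar>pmf p x - pmf q x\<bar>) + (\<Sum>x\<in>?S. \<bar>pmf q x - pmf r x\<bar>)"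
    by (simp add: sum.distrib)
  moreover have "stat_dist p q = 1/2 * (\<Sum>x\<in>?S. \<bar>pmf p x - pmf q x\<bar>)"
    by (rule stat_dist_finite[OF f]) auto
  moreover have "stat_dist q r = 1/2 * (\<Sum>x\<in>?S. \<bar>pmf q x - pmf r x\<bar>)"
    by (rule stat_dist_finite[OF f]) auto
  moreover have "stat_dist p r = 1/2 * (\<Sum>x\<in>?S. \<bar>pmf p x - pmf r x\<bar>)"
    by (rule stat_dist_finite[OF f]) auto
  ultimately show ?thesis by linarith
qed

lemma stat_dist_map:
  assumes "finite (set_pmf p)" "finite (set_pmf q)"
  shows "stat_dist (map_pmf f p) (map_pmf f q) \<le> stat_dist p q"
proof -
  let ?S = "set_pmf p \<union> set_pmf q"
  have fS: "finite ?S" using assms by auto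
  have fT: "finite (f ` ?S)" using fS by auto
  have pm: "pmf (map_pmf f r) y = (\<Sum>x\<in>{x\<in>?S. f x = y}. pmf r x)" if "set_pmf r \<subseteq> ?S" for r y
  proof -
    have "pmf (map_pmf f r) y = measure_pmf.prob r (f -` {y})" by (simp add: pmf_map)
    also have "\<dots> = measure_pmf.prob r ((f -` {y}) \<inter> set_pmf r)" by (simp add: measure_Int_set_pmf)
    also have "(f -` {y}) \<inter> set_pmf r = {x\<in>?S. f x = y} \<inter> set_pmf r" using that by auto
    also have "measure_pmf.prob r \<dots> = measure_pmf.prob r {x\<in>?S. f x = y}" by (simp add: measure_Int_set_pmf)
    also have "\<dots> = (\<Sum>x\<in>{x\<in>?S. f x = y}. pmf r x)"
      using fS by (simp add: measure_measure_pmf_finite)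
    finally show ?thesis .
  qed
  have "stat_dist (map_pmf f p) (map_pmf f q) = 1/2 * (\<Sum>y\<in>f ` ?S. \<bar>pmf (map_pmf f p) y - pmf (map_pmf f q) y\<bar>)"
    by (rule stat_dist_finite[OF fT]) auto
  also have "\<dots> = 1/2 * (\<Sum>y\<in>f ` ?S. \<bar>\<Sum>x\<in>{x\<in>?S. f x = y}. pmf p x - pmf q x\<bar>)"
    by (simp add: pm sum_subtractf)
  also have "\<dots> \<le> 1/2 * (\<Sum>y\<in>f ` ?S. \<Sum>x\<in>{x\<in>?S. f x = y}. \<bar>pmf p x - pmf q x\<bar>)"
    by (intro mult_left_mono sum_mono sum_abs) auto
  also have "\<dots> = 1/2 * (\<Sum>x\<in>?S. \<bar>pmf p x - pmf q x\<bar>)"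
    by (subst sum.group[OF fS fT]) auto
  also have "\<dots> = stat_dist p q" by (rule stat_dist_finite[OF fS, symmetric]) auto
  finally show ?thesis .
qed

lemma stat_dist_pair:
  assumes "finite (set_pmf a)" "finite (set_pmf p)" "finite (set_pmf q)"
  shows "stat_dist (pair_pmf a p) (pair_pmf a q) \<le> stat_dist p q"
proof -
  let ?S = "set_pmf p \<union> set_pmf q"
  let ?A = "set_pmf a"
  have fS: "finite ?S" using assms by auto
  have f2: "finite (?A \<times> ?S)" using assms fS by auto
  have "stat_dist (pair_pmf a p) (pair_pmf a q) = 1/2 * (\<Sum>z\<in>?A \<times> ?S. \<bar>pmf (pair_pmf a p) z - pmf (pair_pmf a q) z\<bar>)"
    by (rule stat_dist_finite[OF f2]) auto
  also have "\<dots> = 1/2 * (\<Sum>x\<in>?A. \<Sum>y\<in>?S. pmf a x * \<bar>pmf p y - pmf q y\<bar>)"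
    apply (subst sum.cartesian_product)
    apply (rule arg_cong[where f="\<lambda>x. 1/2 * x"])
    apply (rule sum.cong)
     apply (auto simp: pmf_pair abs_mult right_diff_distrib[symmetric])
    done
  also have "\<dots> = 1/2 * ((\<Sum>x\<in>?A. pmf a x) * (\<Sum>y\<in>?S. \<bar>pmf p y - pmf q y\<bar>))"
    by (simp add: sum_product)
  also have "(\<Sum>x\<in>?A. pmf a x) = 1" using assms by (simp add: sum_pmf_eq_1)
  also have "1/2 * (1 * (\<Sum>y\<in>?S. \<bar>pmf p y - pmf q y\<bar>)) = stat_dist p q"
    by (simp add: stat_dist_finite[OF fS])
  finally show ?thesis by simp
qed

lemma prob_bind_finite:
  assumes "finite S" "set_pmf M \<subseteq> S"
  shows "measure_pmf.prob (bind_pmf M f) E = (\<Sum>x\<in>S. pmf M x * measure_pmf.prob (f x) E)"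
proof -
  have "emeasure (measure_pmf (bind_pmf M f)) E = (\<integral>\<^sup>+x. emeasure (f x) E \<partial>M)" by simp
  also have "\<dots> = (\<Sum>x\<in>S. emeasure (measure_pmf (f x)) E * ennreal (pmf M x))"
    by (rule nn_integral_measure_pmf_support) (use assms in auto)
  also have "\<dots> = ennreal (\<Sum>x\<in>S. pmf M x * measure_pmf.prob (f x) E)"
    by (simp add: measure_pmf.emeasure_eq_measure mult.commute flip: sum_ennreal ennreal_mult)
  finally show ?thesis
    by (simp add: measure_pmf.emeasure_eq_measure sum_nonneg)
qed

lemma min_entropy_bound:
  assumes "min_entropy W \<ge> m"
  shows "pmf W w \<le> 2 powr (-m)"
proof -
  let ?s = "SUP w. pmf W w"
  have bdd: "bdd_above (range (pmf W))" by (intro bdd_aboveI[of _ 1]) (auto simp: pmf_le_1)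
  have le: "pmf W x \<le> ?s" for x by (rule cSUP_upper[OF _ bdd]) simp
  obtain x where "x \<in> set_pmf W" using set_pmf_not_empty[of W] by blast
  hence "pmf W x > 0" by (simp add: pmf_positive)
  hence pos: "?s > 0" using le[of x] by linarith
  have "log 2 ?s \<le> -m" using assms unfolding min_entropy_def by linarith
  hence "?s \<le> 2 powr (-m)" using pos by (simp add: log_le_iff)
  thus ?thesis using le[of w] by linarith
qed

lemma collision_T_diag:
  fixes p :: "'f::{field,finite} \<times> 'f \<Rightarrow> real" and a :: 'f
  shows "(\<Sum>z\<in>UNIV. p (a, snd z - fst z * a) * p (a, snd z - fst z * a))
         = real CARD('f) * (\<Sum>b\<in>UNIV. p (a, b) * p (a, b))"
proof -
  have "(\<Sum>z\<in>UNIV. p (a, snd z - fst z * a) * p (a, snd z - fst z * a))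
        = (\<Sum>(i::'f, b)\<in>UNIV. p (a, b) * p (a, b))"
    by (rule sum.reindex_bij_witness[where i="\<lambda>(i,b). (i, b + i*a)" and j="\<lambda>(i,y). (i, y - i*a)"])
       auto
  also have "\<dots> = (\<Sum>i::'f\<in>UNIV. \<Sum>b\<in>UNIV. p (a, b) * p (a, b))"
    using sum.cartesian_product[of "\<lambda>(i::'f) b. p (a, b) * p (a, b)" UNIV UNIV] by simp
  also have "\<dots> = real CARD('f) * (\<Sum>b\<in>UNIV. p (a, b) * p (a, b))" by simp
  finally show ?thesis .
qed

lemma collision_T_off:
  fixes p :: "'f::{field,finite} \<times> 'f \<Rightarrow> real" and a a' :: 'f
  assumes "a \<noteq> a'"
  shows "(\<Sum>z\<in>UNIV. p (a, snd z - fst z * a) * p (a', snd z - fst z * a'))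
         = (\<Sum>b\<in>UNIV. p (a, b)) * (\<Sum>b\<in>UNIV. p (a', b))"
proof -
  have d: "a - a' \<noteq> 0" using assms by simp
  have "(\<Sum>z\<in>UNIV. p (a, snd z - fst z * a) * p (a', snd z - fst z * a'))
        = (\<Sum>(b::'f, b')\<in>UNIV. p (a, b) * p (a', b'))"
    apply (rule sum.reindex_bij_witness[where i="\<lambda>(b,b'). ((b'-b)/(a-a'), b + ((b'-b)/(a-a'))*a)"
            and j="\<lambda>(i,y). (y - i*a, y - i*a')"])
    subgoal for z
    proof -
      obtain i y where z: "z = (i,y)" by fastforce
      have "(y - i*a' - (y - i*a)) = i*(a-a')" by (simp add: algebra_simps)
      hence "(y - i*a' - (y - i*a)) / (a-a') = i" using d by simp
      thus ?thesis unfolding z case_prod_conv by simp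
    qed
    subgoal by simp
    subgoal for z
    proof -
      obtain b b' where z: "z = (b,b')" by fastforce
      have r: "\<And>t. b + t * a - t * a' = b + t * (a - a')" by (simp add: algebra_simps)
      have "b + (b' - b) / (a - a') * a - (b' - b) / (a - a') * a' = b + (b'-b)/(a-a') * (a - a')"
        by (rule r)
      also have "\<dots> = b'" using d by simp
      finally show ?thesis using z by simp
    qed
    by auto
  also have "\<dots> = (\<Sum>b\<in>UNIV. \<Sum>b'\<in>UNIV. p (a, b) * p (a', b'))"
    using sum.cartesian_product[of "\<lambda>b b'. p (a, b) * p (a', b')" UNIV UNIV] by simp
  also have "\<dots> = (\<Sum>b\<in>UNIV. p (a, b)) * (\<Sum>b\<in>UNIV. p (a', b))"
    by (simp add: sum_product)
  finally show ?thesis .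
qed

lemma collision_bound:
  fixes p :: "'f::{field,finite} \<times> 'f \<Rightarrow> real"
  assumes nn: "\<And>z. p z \<ge> 0" and s1: "sum p UNIV = 1" and le: "\<And>z. p z \<le> M"
  shows "(\<Sum>z\<in>UNIV. (\<Sum>a\<in>UNIV. p (a, snd z - fst z * a))^2) \<le> real CARD('f) * M + 1"
proof -
  define g where "g z a = p (a, snd z - fst z * a)" for z :: "'f \<times> 'f" and a
  define P where "P a = (\<Sum>b\<in>UNIV. p (a, b))" for a
  define C where "C a = (\<Sum>b\<in>UNIV. p (a, b) * p (a, b))" for a
  have PP: "(\<Sum>a\<in>UNIV. P a) = 1"
    using s1 sum.cartesian_product[of "\<lambda>a b. p (a, b)" UNIV UNIV] by (simp add: P_def)
  have "(\<Sum>z\<in>UNIV. (\<Sum>a\<in>UNIV. p (a, snd z - fst z * a))^2)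
      = (\<Sum>z\<in>UNIV. \<Sum>a\<in>UNIV. \<Sum>a'\<in>UNIV. g z a * g z a')"
    by (simp add: g_def power2_eq_square sum_product)
  also have "\<dots> = (\<Sum>a\<in>UNIV. \<Sum>z\<in>UNIV. \<Sum>a'\<in>UNIV. g z a * g z a')"
    by (rule sum.swap)
  also have "\<dots> = (\<Sum>a\<in>UNIV. \<Sum>a'\<in>UNIV. \<Sum>z\<in>UNIV. g z a * g z a')"
    by (rule sum.cong[OF refl], rule sum.swap)
  also have "\<dots> \<le> (\<Sum>a\<in>UNIV. \<Sum>a'\<in>UNIV. (if a = a' then real CARD('f) * C a else 0) + P a * P a')"
  proof (intro sum_mono)
    fix a a' :: 'f
    show "(\<Sum>z\<in>UNIV. g z a * g z a') \<le> (if a = a' then real CARD('f) * C a else 0) + P a * P a'"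
    proof (cases "a = a'")
      case True
      have "P a * P a \<ge> 0" by simp
      thus ?thesis using True collision_T_diag[of p a] by (simp add: g_def C_def)
    next
      case False
      thus ?thesis using collision_T_off[OF False, of p] by (simp add: g_def P_def)
    qed
  qed
  also have "\<dots> = real CARD('f) * (\<Sum>a\<in>UNIV. C a) + (\<Sum>a\<in>UNIV. P a) * (\<Sum>a\<in>UNIV. P a)"
  proof -
    have e1: "(\<Sum>a\<in>UNIV. \<Sum>a'\<in>UNIV. P a * P a') = (\<Sum>a\<in>UNIV. P a) * (\<Sum>a\<in>UNIV. P a)"
      by (simp add: sum_product)
    have e2: "(\<Sum>a\<in>UNIV. \<Sum>a'\<in>(UNIV::'f set). (if a = a' then real CARD('f) * C a else 0)) = real CARD('f) * (\<Sum>a\<in>UNIV. C a)"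
      by (simp add: sum.delta sum_distrib_left)
    show ?thesis by (simp only: sum.distrib e1 e2)
  qed
  also have "(\<Sum>a\<in>UNIV. C a) \<le> M"
  proof -
    have "(\<Sum>a\<in>UNIV. C a) = (\<Sum>z\<in>UNIV. p z * p z)"
      using sum.cartesian_product[of "\<lambda>a b. p (a, b) * p (a,b)" UNIV UNIV] by (simp add: C_def)
    also have "\<dots> \<le> (\<Sum>z\<in>UNIV. M * p z)"
      by (intro sum_mono mult_right_mono le nn)
    also have "\<dots> = M" using s1 by (simp add: sum_distrib_left[symmetric])
    finally show ?thesis .
  qed
  hence "real CARD('f) * (\<Sum>a\<in>UNIV. C a) \<le> real CARD('f) * M" by (simp add: mult_left_mono)
  finally show ?thesis using PP by simp
qed

lemma lhl_sd:
  fixes D :: "('f::{field,finite} \<times> 'f) pmf" and p :: "'f \<times> 'f \<Rightarrow> real"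
  assumes pD: "\<And>z. pmf D z = (\<Sum>a\<in>UNIV. p (a, snd z - fst z * a)) / real CARD('f)"
    and nn: "\<And>z. p z \<ge> 0" and s1: "sum p UNIV = 1" and le: "\<And>z. p z \<le> M"
  shows "stat_dist D (pmf_of_set UNIV) \<le> 1/2 * sqrt (real CARD('f) * M)"
proof -
  define qq where "qq = real CARD('f)"
  have qpos: "qq > 0" unfolding qq_def by simp
  have cU0: "card (UNIV :: ('f \<times> 'f) set) = CARD('f) * CARD('f)"
    by (metis UNIV_Times_UNIV card_cartesian_product)
  have cU: "real (card (UNIV :: ('f \<times> 'f) set)) = qq * qq"
    unfolding cU0 qq_def by simp
  have pU: "pmf (pmf_of_set (UNIV :: ('f \<times> 'f) set)) z = 1 / (qq*qq)" for z
    by (simp add: pmf_of_set cU0 qq_def)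
  define f where "f z = pmf D z - 1/(qq*qq)" for z
  have sd: "stat_dist D (pmf_of_set UNIV) = 1/2 * (\<Sum>z\<in>UNIV. \<bar>f z\<bar>)"
    by (subst stat_dist_finite[of UNIV]) (auto simp: f_def pU)
  have sD: "(\<Sum>z\<in>UNIV. pmf D z) = 1" by (simp add: sum_pmf_eq_1)
  have "(\<Sum>z\<in>UNIV. (f z)^2) = (\<Sum>z\<in>UNIV. (pmf D z)^2 - 2/(qq*qq) * pmf D z + 1/(qq*qq)^2)"
    using qpos by (intro sum.cong) (auto simp: f_def power2_eq_square field_simps)
  also have "\<dots> = (\<Sum>z\<in>UNIV. (pmf D z)^2) - 2/(qq*qq) * (\<Sum>z\<in>UNIV. pmf D z) + (qq*qq) * (1/(qq*qq)^2)"
    by (simp add: sum.distrib sum_subtractf sum_distrib_left cU qq_def)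
  also have "\<dots> = (\<Sum>z\<in>UNIV. (pmf D z)^2) - 1/(qq*qq)"
    using qpos by (simp add: sD power2_eq_square field_simps)
  also have "(\<Sum>z\<in>UNIV. (pmf D z)^2) = (\<Sum>z\<in>UNIV. (\<Sum>a\<in>UNIV. p (a, snd z - fst z * a))^2) / (qq*qq)"
    by (simp add: pD qq_def power_divide sum_divide_distrib[symmetric] power2_eq_square[of "real CARD(_)"])
  also have "\<dots> \<le> (qq * M + 1) / (qq*qq)"
    using collision_bound[of p M, OF nn s1 le] qpos unfolding qq_def
    by (intro divide_right_mono) auto
  finally have sq: "(\<Sum>z\<in>UNIV. (f z)^2) \<le> M / qq"
    using qpos by (simp add: field_simps)
  have "(\<Sum>z\<in>UNIV. \<bar>f z\<bar>) = (\<Sum>z\<in>UNIV. \<bar>f z\<bar> * \<bar>1\<bar>)" by simp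
  also have "\<dots> \<le> L2_set f UNIV * L2_set (\<lambda>_::'f\<times>'f. 1) UNIV" using L2_set_mult_ineq[of f "\<lambda>_. 1" UNIV] by simp
  also have "\<dots> = sqrt ((\<Sum>z\<in>UNIV. (f z)^2) * (qq*qq))"
    using qpos by (simp add: L2_set_def cU real_sqrt_mult qq_def)
  also have "\<dots> \<le> sqrt ((M / qq) * (qq*qq))"
    using sq qpos by (intro real_sqrt_le_mono mult_right_mono) auto
  also have "(M / qq) * (qq*qq) = qq * M" using qpos by (simp add: field_simps)
  finally show ?thesis unfolding sd qq_def by simp
qed

lemma sum_prob_bound:
  fixes \<mu> :: "'b pmf" and c :: "'a \<Rightarrow> real" and E :: "'a \<Rightarrow> 'b set"
  assumes fin: "finite S" and cnn: "\<And>w. c w \<ge> 0"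
    and bnd: "\<And>x. (\<Sum>w\<in>S. c w * indicator (E w) x) \<le> C"
  shows "(\<Sum>w\<in>S. c w * measure_pmf.prob \<mu> (E w)) \<le> C"
proof -
  have int: "integrable (measure_pmf \<mu>) (\<lambda>x. c w * indicator (E w) x :: real)" for w
    by (rule measure_pmf.integrable_const_bound[where B="\<bar>c w\<bar>"]) (auto simp: indicator_def)
  have intS: "integrable (measure_pmf \<mu>) (\<lambda>x. \<Sum>w\<in>S. c w * indicator (E w) x :: real)"
    by (rule Bochner_Integration.integrable_sum[where f="\<lambda>w x. c w * indicator (E w) x"]) (rule int)
  have "(\<Sum>w\<in>S. c w * measure_pmf.prob \<mu> (E w)) = (\<Sum>w\<in>S. measure_pmf.expectation \<mu> (\<lambda>x. c w * indicator (E w) x))"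
    by (simp add: integral_mult_right_zero)
  also have "\<dots> = measure_pmf.expectation \<mu> (\<lambda>x. \<Sum>w\<in>S. c w * indicator (E w) x)"
    by (rule Bochner_Integration.integral_sum[where f="\<lambda>w x. c w * indicator (E w) x", symmetric]) (rule int)
  also have "\<dots> \<le> measure_pmf.expectation \<mu> (\<lambda>x. C)"
    by (rule integral_mono[OF intS]) (auto intro: bnd)
  also have "\<dots> = C" by simp
  finally show ?thesis .
qed

lemma stat_dist_sym: "stat_dist p q = stat_dist q p"
  unfolding stat_dist_def by (simp add: abs_minus_commute)

lemma pair_pmf_of_set:
  assumes "finite A" "A \<noteq> {}" "finite B" "B \<noteq> {}"
  shows "pair_pmf (pmf_of_set A) (pmf_of_set B) = pmf_of_set (A \<times> B)"
proof (rule pmf_eqI)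
  fix z :: "'a \<times> 'b"
  obtain a b where z: "z = (a, b)" by fastforce
  show "pmf (pair_pmf (pmf_of_set A) (pmf_of_set B)) z = pmf (pmf_of_set (A \<times> B)) z"
    using assms by (simp add: z pmf_pair pmf_of_set card_cartesian_product indicator_def)
qed

locale fe =
  fixes enc :: "'f::{field,finite} \<Rightarrow> bool list" and n l :: nat
  assumes ev: "even n" and bij: "bij_betw enc UNIV {xs. length xs = n div 2}" and lk: "l \<le> n div 2"
begin

abbreviation "K \<equiv> n div 2"
abbreviation "V \<equiv> n div 2 - l"

definition phi :: "bool list \<Rightarrow> 'f \<times> 'f" where
  "phi w = (inv enc (take K w), inv enc (drop K w))"
definition G :: "'f \<times> 'f \<Rightarrow> bool list \<times> ('f \<times> bool list)" where
  "G z = (drop V (enc (snd z)), (fst z, take V (enc (snd z))))"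
definition H' :: "'f \<times> 'f \<Rightarrow> ('f \<times> 'f) pmf" where
  "H' x = map_pmf (\<lambda>i. (i, i * fst x + snd x)) (pmf_of_set UNIV)"

lemma len_enc[simp]: "length (enc x) = K"
  using bij_betw_apply[OF bij, of x] by simp

lemma range_enc: "range enc = {xs. length xs = K}"
  using bij_betw_imp_surj_on[OF bij] .

lemma inj_enc: "inj enc"
  using bij_betw_imp_inj_on[OF bij] .

lemma enc_inv: "length xs = K \<Longrightarrow> enc (inv enc xs) = xs"
  by (rule f_inv_into_f) (simp add: range_enc)

lemma inv_enc[simp]: "inv enc (enc x) = x"
  using inj_enc by simp

lemma enc_eq_iff[simp]: "enc x = enc y \<longleftrightarrow> x = y"
  using inj_enc by (auto dest: injD)

lemma card_bits: "card {xs :: bool list. length xs = j} = 2 ^ j"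
  using card_lists_length_eq[of "UNIV :: bool set" j] by simp

lemma finite_bits: "finite {xs :: bool list. length xs = j}"
  using finite_lists_length_eq[of "UNIV :: bool set" j] by simp

lemma card_F: "CARD('f) = 2 ^ K"
  using bij_betw_same_card[OF bij] card_bits by simp

lemma phi_inj: "inj_on phi {w. length w = n}"
proof (rule inj_onI)
  fix w w' assume w: "w \<in> {w. length w = n}" and w': "w' \<in> {w. length w = n}" and e: "phi w = phi w'"
  have lt: "length (take K w) = K" "length (take K w') = K" using w w' by auto
  have ld: "length (drop K w) = K" "length (drop K w') = K" using w w' ev by (auto elim!: evenE)
  have "inv enc (take K w) = inv enc (take K w')" using e by (simp add: phi_def)
  hence "enc (inv enc (take K w)) = enc (inv enc (take K w'))" by (rule arg_cong)
  hence t: "take K w = take K w'" by (simp only: enc_inv[OF lt(1)] enc_inv[OF lt(2)])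
  have "inv enc (drop K w) = inv enc (drop K w')" using e by (simp add: phi_def)
  hence "enc (inv enc (drop K w)) = enc (inv enc (drop K w'))" by (rule arg_cong)
  hence d: "drop K w = drop K w'" by (simp only: enc_inv[OF ld(1)] enc_inv[OF ld(2)])
  from t d have "take K w @ drop K w = take K w' @ drop K w'" by simp
  thus "w = w'" by simp
qed

lemma gen_eq: "gen_ex enc K V w = map_pmf G (H' (phi w))"
  unfolding gen_ex_def H'_def G_def phi_def by (simp add: map_pmf_comp Let_def)

lemma G_inj: "inj G"
proof (rule injI)
  fix z z' assume e: "G z = G z'"
  have "enc (snd z) = enc (snd z')"
    using e unfolding G_def by (metis append_take_drop_id prod.inject)
  thus "z = z'" using e unfolding G_def by (simp add: prod_eq_iff)
qed

lemma G_range: "range G = {R. length R = l} \<times> (UNIV \<times> {s. length s = V})"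
proof
  show "range G \<subseteq> {R. length R = l} \<times> (UNIV \<times> {s. length s = V})"
    using lk by (auto simp: G_def)
  have *: "(R, (i, s)) \<in> range G" if xx: "length R = l" "length s = V" for R s :: "bool list" and i :: 'f
  proof -
    have l: "length (s @ R) = K" using xx lk by simp
    have "G (i, inv enc (s @ R)) = (R, (i, s))"
      unfolding G_def using enc_inv[OF l] xx by simp
    thus ?thesis by (metis rangeI)
  qed
  show "{R. length R = l} \<times> (UNIV \<times> {s. length s = V}) \<subseteq> range G"
    using * by auto
qed

lemma mapGU: "map_pmf G (pmf_of_set UNIV) = pair_pmf (uniform_bits l) (pmf_of_set (UNIV \<times> {s. length s = V}))"
proof -
  have "map_pmf G (pmf_of_set UNIV) = pmf_of_set (range G)"
    by (rule map_pmf_of_set_inj) (use G_inj in auto)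
  also have "\<dots> = pmf_of_set ({R. length R = l} \<times> (UNIV \<times> {s. length s = V}))" by (simp add: G_range)
  also have "\<dots> = pair_pmf (uniform_bits l) (pmf_of_set (UNIV \<times> {s. length s = V}))"
    unfolding uniform_bits_def
    by (rule pair_pmf_of_set[symmetric]) (auto simp: finite_bits intro: exI[of _ "replicate _ False"])
  finally show ?thesis .
qed

lemma pmf_H': "pmf (H' x) z = (if snd z = fst z * fst x + snd x then 1 / real CARD('f) else 0)"
proof -
  let ?h = "\<lambda>i. (i, i * fst x + snd x)"
  have inj: "inj ?h" by (auto intro: injI)
  have "H' x = pmf_of_set (range ?h)"
    unfolding H'_def by (rule map_pmf_of_set_inj) (use inj in auto)
  moreover have "card (range ?h) = CARD('f)" using inj by (simp add: card_image)
  moreover have "z \<in> range ?h \<longleftrightarrow> snd z = fst z * fst x + snd x"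
    by (cases z) auto
  ultimately show ?thesis by (simp add: pmf_of_set)
qed

lemma pmf_D: "pmf (bind_pmf X H') z = (\<Sum>a\<in>UNIV. pmf X (a, snd z - fst z * a)) / real CARD('f)"
proof -
  have "pmf (bind_pmf X H') z = (\<Sum>x\<in>UNIV. pmf (H' x) z * pmf X x)"
    unfolding pmf_bind by (rule integral_measure_pmf_real) auto
  also have "\<dots> = (\<Sum>a\<in>UNIV. \<Sum>b\<in>UNIV. pmf (H' (a, b)) z * pmf X (a, b))"
    using sum.cartesian_product[of "\<lambda>a b. pmf (H' (a, b)) z * pmf X (a, b)" UNIV UNIV] by simp
  also have "\<dots> = (\<Sum>a\<in>UNIV. \<Sum>b\<in>UNIV. if b = snd z - fst z * a then pmf X (a, b) / real CARD('f) else 0)"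
    by (intro sum.cong refl) (auto simp: pmf_H' algebra_simps)
  also have "\<dots> = (\<Sum>a\<in>UNIV. pmf X (a, snd z - fst z * a) / real CARD('f))"
    by (simp add: sum.delta')
  finally show ?thesis by (simp add: sum_divide_distrib)
qed

lemma pX_bound:
  assumes supp: "set_pmf W \<subseteq> {w. length w = n}" and me: "min_entropy W \<ge> m"
  shows "pmf (map_pmf phi W) z \<le> 2 powr (-m)"
proof (cases "z \<in> phi ` set_pmf W")
  case True
  then obtain w where w: "w \<in> set_pmf W" "z = phi w" by auto
  have "inj_on phi (set_pmf W)" using phi_inj supp by (rule inj_on_subset)
  hence "pmf (map_pmf phi W) z = pmf W w" using w by (simp add: pmf_map_inj)
  thus ?thesis using min_entropy_bound[OF me] by simp
next
  case False
  hence "z \<notin> set_pmf (map_pmf phi W)" by simp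
  hence "pmf (map_pmf phi W) z = 0" by (metis set_pmf_iff)
  thus ?thesis by simp
qed

lemma extractor:
  assumes supp: "set_pmf W \<subseteq> {w. length w = n}" and me: "min_entropy W \<ge> m"
  shows "stat_dist (bind_pmf W (gen_ex enc K V))
           (pair_pmf (uniform_bits l) (map_pmf snd (bind_pmf W (gen_ex enc K V))))
         \<le> sqrt (real CARD('f) * 2 powr (-m))"
proof -
  define D where "D = bind_pmf (map_pmf phi W) H'"
  define U2 where "U2 = (pmf_of_set UNIV :: ('f \<times> 'f) pmf)"
  define B where "B = (pmf_of_set (UNIV \<times> {s :: bool list. length s = V}) :: ('f \<times> bool list) pmf)"
  have bw: "bind_pmf W (gen_ex enc K V) = map_pmf G D"
    unfolding D_def gen_eq by (simp add: map_bind_pmf bind_map_pmf)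
  have lhl: "stat_dist D U2 \<le> 1/2 * sqrt (real CARD('f) * 2 powr (-m))"
    unfolding U2_def
  proof (rule lhl_sd)
    show "pmf D z = (\<Sum>a\<in>UNIV. pmf (map_pmf phi W) (a, snd z - fst z * a)) / real CARD('f)" for z
      unfolding D_def by (rule pmf_D)
    show "sum (pmf (map_pmf phi W)) UNIV = 1" by (simp add: sum_pmf_eq_1)
    show "pmf (map_pmf phi W) z \<le> 2 powr (-m)" for z by (rule pX_bound[OF supp me])
  qed simp
  have fD: "finite (set_pmf D)" and fU: "finite (set_pmf U2)" by auto
  have fGD: "finite (set_pmf (map_pmf G D))" and fGU: "finite (set_pmf (map_pmf G U2))" using fD fU by auto
  have fsGD: "finite (set_pmf (map_pmf snd (map_pmf G D)))" using fGD by simp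
  have fUl: "finite (set_pmf (uniform_bits l))"
    unfolding uniform_bits_def
    by (subst set_pmf_of_set) (auto simp: finite_bits intro: exI[of _ "replicate _ False"])
  have fB: "finite (set_pmf B)"
    unfolding B_def by (subst set_pmf_of_set) (auto simp: finite_bits intro: exI[of _ "replicate _ False"])
  have GU: "map_pmf G U2 = pair_pmf (uniform_bits l) B" unfolding U2_def B_def by (rule mapGU)
  have fP: "finite (set_pmf (pair_pmf (uniform_bits l) (map_pmf snd (map_pmf G D))))"
    using fUl fsGD by simp
  have "stat_dist (map_pmf G D) (pair_pmf (uniform_bits l) (map_pmf snd (map_pmf G D)))
     \<le> stat_dist (map_pmf G D) (map_pmf G U2) + stat_dist (map_pmf G U2) (pair_pmf (uniform_bits l) (map_pmf snd (map_pmf G D)))"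
    by (rule stat_dist_triangle[OF fGD fGU fP])
  also have "stat_dist (map_pmf G D) (map_pmf G U2) \<le> stat_dist D U2"
    by (rule stat_dist_map[OF fD fU])
  also have "stat_dist (map_pmf G U2) (pair_pmf (uniform_bits l) (map_pmf snd (map_pmf G D)))
      \<le> stat_dist B (map_pmf snd (map_pmf G D))"
    unfolding GU by (rule stat_dist_pair[OF fUl fB fsGD])
  also have "B = map_pmf snd (map_pmf G U2)" unfolding GU by (simp add: map_snd_pair_pmf)
  also have "stat_dist (map_pmf snd (map_pmf G U2)) (map_pmf snd (map_pmf G D)) \<le> stat_dist (map_pmf G U2) (map_pmf G D)"
    by (rule stat_dist_map[OF fGU fGD])
  also have "\<dots> \<le> stat_dist U2 D"
    by (rule stat_dist_map[OF fU fD])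
  also have "stat_dist U2 D = stat_dist D U2" by (rule stat_dist_sym)
  finally show ?thesis unfolding bw using lhl by linarith
qed

lemma rep_ne_None: "rep_ex enc K V w P' \<noteq> None \<longleftrightarrow> snd P' = take V (enc (fst P' * fst (phi w) + snd (phi w)))"
  unfolding rep_ex_def phi_def by (simp add: Let_def)

lemma card_prefix: "card {xs :: bool list. length xs = K \<and> take V xs = s} \<le> 2 ^ l"
proof -
  let ?L = "{xs :: bool list. length xs = K \<and> take V xs = s}"
  have "inj_on (drop V) ?L"
  proof (rule inj_onI)
    fix x y assume "x \<in> ?L" "y \<in> ?L" "drop V x = drop V y"
    hence "take V x = take V y" "drop V x = drop V y" by auto
    thus "x = y" by (metis append_take_drop_id)
  qed
  moreover have "drop V ` ?L \<subseteq> {t. length t = l}" using lk by auto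
  ultimately have "card ?L \<le> card {t :: bool list. length t = l}"
    by (intro card_inj_on_le finite_bits)
  thus ?thesis by (simp add: card_bits)
qed

lemma card_win:
  assumes SW: "SW \<subseteq> {w. length w = n}" "finite SW"
  shows "card {w\<in>SW. i * fst (phi w) + snd (phi w) = y \<and> (i', s) \<noteq> (i, take V (enc y))
           \<and> s = take V (enc (i' * fst (phi w) + snd (phi w)))} \<le> 2 ^ l"
    (is "card ?T \<le> _")
proof (cases "i' = i")
  case True
  have e: "?T = {}"
  proof (rule ccontr)
    assume "?T \<noteq> {}" then obtain w where w: "w \<in> ?T" by blast
    hence "s = take V (enc (i * fst (phi w) + snd (phi w)))" using True by simp
    also have "i * fst (phi w) + snd (phi w) = y" using w by simp
    finally show False using w True by simp
  qed
  show ?thesis unfolding e by simp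
next
  case False
  define psi where "psi w = enc (i' * fst (phi w) + snd (phi w))" for w
  have "inj_on psi ?T"
  proof (rule inj_onI)
    fix w w' assume w: "w \<in> ?T" and w': "w' \<in> ?T" and e: "psi w = psi w'"
    obtain a b where ab: "phi w = (a, b)" by fastforce
    obtain a' b' where ab': "phi w' = (a', b')" by fastforce
    have e1: "i' * a + b = i' * a' + b'" using e ab ab' by (simp add: psi_def)
    have e2: "i * a + b = i * a' + b'" using w w' ab ab' by simp
    have "(i' - i) * (a - a') = (i'*a + b - (i*a + b)) - (i'*a' + b' - (i*a' + b'))"
      by (simp add: algebra_simps)
    also have "\<dots> = 0" by (simp only: e1 e2) simp
    finally have "(i' - i) * (a - a') = 0" .
    hence "a = a'" using False by simp
    hence "b = b'" using e2 by simp
    hence "phi w = phi w'" using ab ab' \<open>a = a'\<close> by simp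
    thus "w = w'" using phi_inj w w' SW by (auto dest: inj_onD)
  qed
  hence "card ?T = card (psi ` ?T)" by (simp add: card_image)
  also have "\<dots> \<le> card {xs :: bool list. length xs = K \<and> take V xs = s}"
  proof (rule card_mono)
    show "finite {xs :: bool list. length xs = K \<and> take V xs = s}"
      by (rule finite_subset[OF _ finite_bits[of K]]) blast
    show "psi ` ?T \<subseteq> {xs. length xs = K \<and> take V xs = s}"
      unfolding psi_def by auto
  qed
  also have "\<dots> \<le> 2 ^ l" by (rule card_prefix)
  finally show ?thesis .
qed

lemma pointwise_bound:
  assumes supp: "set_pmf W \<subseteq> {w. length w = n}" and me: "min_entropy W \<ge> m"
  shows "(\<Sum>w\<in>{w\<in>set_pmf W. i * fst (phi w) + snd (phi w) = y}.
           pmf W w * indicator {P'. P' \<noteq> (i, take V (enc y)) \<and> rep_ex enc K V w P' \<noteq> None} x)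
         \<le> 2 powr (real l - m)"
proof -
  obtain i' s where x: "x = (i', s)" by fastforce
  have fSW: "finite (set_pmf W)" by (rule finite_subset[OF supp finite_bits])
  let ?S = "{w\<in>set_pmf W. i * fst (phi w) + snd (phi w) = y}"
  let ?T = "{w\<in>set_pmf W. i * fst (phi w) + snd (phi w) = y \<and> (i', s) \<noteq> (i, take V (enc y))
           \<and> s = take V (enc (i' * fst (phi w) + snd (phi w)))}"
  have "(\<Sum>w\<in>?S. pmf W w * indicator {P'. P' \<noteq> (i, take V (enc y)) \<and> rep_ex enc K V w P' \<noteq> None} x)
      = (\<Sum>w\<in>?S. if w \<in> ?T then pmf W w else 0)"
    by (intro sum.cong refl) (auto simp: x indicator_def rep_ne_None simp del: not_None_eq)
  also have "\<dots> = (\<Sum>w\<in>?T. pmf W w)"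
    using fSW by (simp add: sum.If_cases Int_def conj_commute)
  also have "\<dots> \<le> (\<Sum>w\<in>?T. 2 powr (-m))"
    by (intro sum_mono min_entropy_bound[OF me])
  also have "\<dots> = real (card ?T) * 2 powr (-m)" by simp
  also have "\<dots> \<le> 2 ^ l * 2 powr (-m)"
  proof -
    have "card ?T \<le> 2 ^ l" by (rule card_win[OF supp fSW])
    hence "real (card ?T) \<le> real (2 ^ l)" by (rule of_nat_mono)
    hence "real (card ?T) \<le> 2 ^ l" by simp
    thus ?thesis by (intro mult_right_mono) auto
  qed
  also have "\<dots> = 2 powr (real l - m)"
  proof -
    have "2 powr (real l - m) = 2 powr real l * 2 powr (-m)" by (simp add: powr_add[symmetric])
    also have "2 powr real l = (2::real) ^ l" by (simp add: powr_realpow)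
    finally show ?thesis by simp
  qed
  finally show ?thesis .
qed

lemma robust:
  fixes A :: "bool list \<Rightarrow> 'f \<times> bool list \<Rightarrow> ('f \<times> bool list) pmf"
  assumes supp: "set_pmf W \<subseteq> {w. length w = n}" and me: "min_entropy W \<ge> m"
  shows "measure_pmf.prob (bind_pmf W (\<lambda>w. bind_pmf (gen_ex enc K V w) (\<lambda>(R, P).
             map_pmf (\<lambda>P'. (w, P, P')) (A R P))))
          {(w, P, P'). P' \<noteq> P \<and> rep_ex enc K V w P' \<noteq> None} \<le> real CARD('f) * 2 powr (real l - m)"
proof -
  define E :: "(bool list \<times> ('f \<times> bool list) \<times> ('f \<times> bool list)) set"
    where "E = {(w, P, P'). P' \<noteq> P \<and> rep_ex enc K V w P' \<noteq> None}"
  define yv where "yv w i = i * fst (phi w) + snd (phi w)" for w i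
  define Ev where "Ev w i y = {P'. P' \<noteq> (i, take V (enc y)) \<and> rep_ex enc K V w P' \<noteq> None}" for w i y
  define Av where "Av i y = A (drop V (enc y)) (i, take V (enc y))" for i y
  define q where "q = real CARD('f)"
  have qpos: "q > 0" unfolding q_def by simp
  have fSW: "finite (set_pmf W)" by (rule finite_subset[OF supp finite_bits])
  have step2: "measure_pmf.prob (bind_pmf (gen_ex enc K V w) (\<lambda>(R, P). map_pmf (\<lambda>P'. (w, P, P')) (A R P))) E
     = (\<Sum>i\<in>UNIV. measure_pmf.prob (Av i (yv w i)) (Ev w i (yv w i)) / q)" for w
  proof -
    have "bind_pmf (gen_ex enc K V w) (\<lambda>(R, P). map_pmf (\<lambda>P'. (w, P, P')) (A R P))
        = bind_pmf (pmf_of_set UNIV) (\<lambda>i. map_pmf (\<lambda>P'. (w, (i, take V (enc (yv w i))), P')) (Av i (yv w i)))"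
      unfolding gen_eq H'_def by (simp add: bind_map_pmf G_def Av_def yv_def)
    hence "measure_pmf.prob (bind_pmf (gen_ex enc K V w) (\<lambda>(R, P). map_pmf (\<lambda>P'. (w, P, P')) (A R P))) E
       = (\<Sum>i\<in>UNIV. pmf (pmf_of_set UNIV) i * measure_pmf.prob (map_pmf (\<lambda>P'. (w, (i, take V (enc (yv w i))), P')) (Av i (yv w i))) E)"
      by (simp add: prob_bind_finite[of UNIV])
    also have "\<dots> = (\<Sum>i\<in>UNIV. measure_pmf.prob (Av i (yv w i)) (Ev w i (yv w i)) / q)"
    proof (intro sum.cong refl)
      fix i :: 'f
      have "(\<lambda>P'. (w, (i, take V (enc (yv w i))), P')) -` E = Ev w i (yv w i)"
        by (auto simp: E_def Ev_def)
      thus "pmf (pmf_of_set UNIV) i * measure_pmf.prob (map_pmf (\<lambda>P'. (w, (i, take V (enc (yv w i))), P')) (Av i (yv w i))) E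
          = measure_pmf.prob (Av i (yv w i)) (Ev w i (yv w i)) / q"
        by (simp add: measure_map_pmf pmf_of_set q_def)
    qed
    finally show ?thesis .
  qed
  have inner: "(\<Sum>w\<in>set_pmf W. pmf W w * measure_pmf.prob (Av i (yv w i)) (Ev w i (yv w i))) \<le> q * 2 powr (real l - m)" for i
  proof -
    have "(\<Sum>w\<in>set_pmf W. pmf W w * measure_pmf.prob (Av i (yv w i)) (Ev w i (yv w i)))
        = (\<Sum>y\<in>UNIV. \<Sum>w\<in>{w\<in>set_pmf W. yv w i = y}. pmf W w * measure_pmf.prob (Av i (yv w i)) (Ev w i (yv w i)))"
      by (rule sum.group[symmetric, OF fSW]) auto
    also have "\<dots> = (\<Sum>y\<in>UNIV. \<Sum>w\<in>{w\<in>set_pmf W. yv w i = y}. pmf W w * measure_pmf.prob (Av i y) (Ev w i y))"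
      by (intro sum.cong refl) auto
    also have "\<dots> \<le> (\<Sum>y\<in>(UNIV::'f set). 2 powr (real l - m))"
    proof (intro sum_mono)
      fix y :: 'f
      show "(\<Sum>w\<in>{w\<in>set_pmf W. yv w i = y}. pmf W w * measure_pmf.prob (Av i y) (Ev w i y)) \<le> 2 powr (real l - m)"
      proof (rule sum_prob_bound)
        show "finite {w\<in>set_pmf W. yv w i = y}" using fSW by simp
        show "\<And>w. 0 \<le> pmf W w" by simp
        fix x
        show "(\<Sum>w\<in>{w\<in>set_pmf W. yv w i = y}. pmf W w * indicator (Ev w i y) x) \<le> 2 powr (real l - m)"
          using pointwise_bound[OF supp me, of i y x] unfolding yv_def Ev_def .
      qed
    qed
    also have "\<dots> = q * 2 powr (real l - m)" by (simp add: q_def)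
    finally show ?thesis .
  qed
  have "measure_pmf.prob (bind_pmf W (\<lambda>w. bind_pmf (gen_ex enc K V w) (\<lambda>(R, P).
             map_pmf (\<lambda>P'. (w, P, P')) (A R P)))) E
      = (\<Sum>w\<in>set_pmf W. pmf W w * (\<Sum>i\<in>UNIV. measure_pmf.prob (Av i (yv w i)) (Ev w i (yv w i)) / q))"
    by (simp add: prob_bind_finite[OF fSW] step2)
  also have "\<dots> = (\<Sum>i\<in>UNIV. \<Sum>w\<in>set_pmf W. pmf W w * measure_pmf.prob (Av i (yv w i)) (Ev w i (yv w i))) / q"
    by (simp add: sum_distrib_left sum_divide_distrib sum.swap[of _ "set_pmf W"])
  also have "\<dots> \<le> (\<Sum>i\<in>(UNIV::'f set). q * 2 powr (real l - m)) / q"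
    using qpos by (intro divide_right_mono sum_mono inner) auto
  also have "\<dots> = q * 2 powr (real l - m)" using qpos by (simp add: q_def)
  finally show ?thesis unfolding E_def q_def .
qed

end

lemma num1:
  fixes K m eps :: real
  assumes "eps > 0" "m \<ge> K + 2 * log 2 (1 / eps)"
  shows "sqrt (2 powr K * 2 powr (-m)) \<le> eps"
proof -
  have l: "log 2 (1 / eps) = - log 2 eps" using assms(1) by (simp add: log_divide)
  have "2 powr K * 2 powr (-m) = 2 powr (K - m)" by (simp add: powr_add[symmetric])
  also have "\<dots> \<le> 2 powr (2 * log 2 eps)" using assms l by (intro powr_mono) auto
  also have "\<dots> = 2 powr (log 2 eps + log 2 eps)" by (simp only: mult_2)
  also have "\<dots> = 2 powr (log 2 eps) * 2 powr (log 2 eps)" by (rule powr_add)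
  also have "\<dots> = eps^2" using assms(1) by (simp add: power2_eq_square)
  finally have "2 powr K * 2 powr (-m) \<le> eps^2" .
  hence "sqrt (2 powr K * 2 powr (-m)) \<le> sqrt (eps^2)" by (rule real_sqrt_le_mono)
  thus ?thesis using assms(1) by simp
qed

lemma num2:
  fixes K m delta l :: real
  assumes "delta > 0" "l \<le> m - K - log 2 (1 / delta)"
  shows "2 powr K * 2 powr (l - m) \<le> delta"
proof -
  have lg: "log 2 (1 / delta) = - log 2 delta" using assms(1) by (simp add: log_divide)
  have "2 powr K * 2 powr (l - m) = 2 powr (K + (l - m))" by (simp add: powr_add)
  also have "\<dots> \<le> 2 powr (log 2 delta)" using assms lg by (intro powr_mono) auto
  also have "\<dots> = delta" using assms(1) by simp
  finally show ?thesis .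
qed

lemma hamming0:
  assumes "length w = n" "length w' = n" "hamming_dist w w' \<le> 0"
  shows "w = w'"
proof -
  have f: "finite {i. i < length w \<and> w ! i \<noteq> w' ! i}" by simp
  have "card {i. i < length w \<and> w ! i \<noteq> w' ! i} = 0" using assms(3) unfolding hamming_dist_def by simp
  hence "{i. i < length w \<and> w ! i \<noteq> w' ! i} = {}" using f by simp
  thus ?thesis using assms(1,2) by (intro nth_equalityI) auto
qed

theorem theorem1:
  fixes enc :: "'f::{field,finite} \<Rightarrow> bool list"
    and n l :: nat and m eps delta :: real
  assumes "even n"
    and "bij_betw enc UNIV {xs. length xs = n div 2}"
    and "\<And>x y. enc (x + y) = map2 (\<lambda>p q. p \<noteq> q) (enc x) (enc y)"
    and "l \<le> n div 2"
    and "eps > 0" and "delta > 0"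
    and "real l \<le> m - real n / 2 - log 2 (1 / delta)"
    and "m \<ge> real n / 2 + 2 * log 2 (1 / eps)"
  shows "fuzzy_extractor n m l 0 eps
           (gen_ex enc (n div 2) (n div 2 - l)) (rep_ex enc (n div 2) (n div 2 - l))
       \<and> post_app_robust n m delta
           (gen_ex enc (n div 2) (n div 2 - l)) (rep_ex enc (n div 2) (n div 2 - l))"
proof -
  interpret fe enc n l using assms(1,2,4) by unfold_locales
  have Kr: "real (n div 2) = real n / 2" using assms(1) by (auto elim!: evenE)
  have q: "real CARD('f) = 2 powr real (n div 2)" by (simp add: card_F powr_realpow)
  have corr: "length R = l \<and> (\<forall>w'. length w' = n \<and> hamming_dist w w' \<le> 0 \<longrightarrow> rep_ex enc K V w' P = Some R)"
    if w: "length w = n" and RP: "(R, P) \<in> set_pmf (gen_ex enc K V w)" for w R P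
  proof -
    obtain i where RP': "(R, P) = (let y = enc (i * inv enc (take K w) + inv enc (drop K w)) in (drop V y, (i, take V y)))"
      using RP unfolding gen_ex_def by (auto simp: Let_def)
    have "length R = l" using RP' assms(4) by (simp add: Let_def)
    moreover have "rep_ex enc K V w P = Some R"
      using RP' unfolding rep_ex_def by (simp add: Let_def)
    ultimately show ?thesis using hamming0 w by blast
  qed
  have ext: "stat_dist (bind_pmf W (gen_ex enc K V))
           (pair_pmf (uniform_bits l) (map_pmf snd (bind_pmf W (gen_ex enc K V)))) \<le> eps"
    if "set_pmf W \<subseteq> {w. length w = n}" "min_entropy W \<ge> m" for W
  proof -
    have "stat_dist (bind_pmf W (gen_ex enc K V))
           (pair_pmf (uniform_bits l) (map_pmf snd (bind_pmf W (gen_ex enc K V)))) \<le> sqrt (real CARD('f) * 2 powr (-m))"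
      by (rule extractor[OF that])
    also have "\<dots> \<le> eps" unfolding q Kr using num1[of eps "real n / 2" m] assms(5,8) by simp
    finally show ?thesis .
  qed
  have rob: "measure_pmf.prob (bind_pmf W (\<lambda>w. bind_pmf (gen_ex enc K V w) (\<lambda>(R, P).
             map_pmf (\<lambda>P'. (w, P, P')) (A R P))))
          {(w, P, P'). P' \<noteq> P \<and> rep_ex enc K V w P' \<noteq> None} \<le> delta"
    if "set_pmf W \<subseteq> {w. length w = n}" "min_entropy W \<ge> m" for W A
  proof -
    have "measure_pmf.prob (bind_pmf W (\<lambda>w. bind_pmf (gen_ex enc K V w) (\<lambda>(R, P).
             map_pmf (\<lambda>P'. (w, P, P')) (A R P))))
          {(w, P, P'). P' \<noteq> P \<and> rep_ex enc K V w P' \<noteq> None} \<le> real CARD('f) * 2 powr (real l - m)"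
      by (rule robust[OF that])
    also have "\<dots> \<le> delta" unfolding q Kr using num2[of delta "real l" m "real n / 2"] assms(6,7) by simp
    finally show ?thesis .
  qed
  have A1: "\<forall>w. length w = n \<longrightarrow>
        (\<forall>R P. (R, P) \<in> set_pmf (gen_ex enc K V w) \<longrightarrow>
           length R = l \<and>
           (\<forall>w'. length w' = n \<and> hamming_dist w w' \<le> 0 \<longrightarrow> rep_ex enc K V w' P = Some R))"
    using corr by blast
  have A2: "\<forall>W :: bool list pmf. set_pmf W \<subseteq> {w. length w = n} \<and> min_entropy W \<ge> m \<longrightarrow>
        stat_dist (bind_pmf W (gen_ex enc K V))
                  (pair_pmf (uniform_bits l) (map_pmf snd (bind_pmf W (gen_ex enc K V)))) \<le> eps"
    using ext by blast
  have A3: "\<forall>(W :: bool list pmf) (A :: bool list \<Rightarrow> ('f \<times> bool list) \<Rightarrow> ('f \<times> bool list) pmf).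
        set_pmf W \<subseteq> {w. length w = n} \<and> min_entropy W \<ge> m \<longrightarrow>
        measure_pmf.prob
          (bind_pmf W (\<lambda>w. bind_pmf (gen_ex enc K V w) (\<lambda>(R, P).
             map_pmf (\<lambda>P'. (w, P, P')) (A R P))))
          {(w, P, P'). P' \<noteq> P \<and> rep_ex enc K V w P' \<noteq> None} \<le> delta"
    using rob by blast
  show ?thesis
    unfolding fuzzy_extractor_def post_app_robust_def
    using A1 A2 A3 by (intro conjI)
qed

end
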